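(* Let $d\ge3$ and let $V:\mathbb{C}^{d^2-1}\to\mathbb{C}^d\otimes\mathbb{C}^d$ be any isometry whose range is orthogonal to $\ket{\phi_d^+}=\frac1{\sqrt d}\sum_{k=0}^{d-1}\ket{k}\otimes\ket{k}$ (equivalently, the range is the orthogonal complement of $\ket{\phi^+_d}$). Let $\mathcal{N}^V_{d^2-1}:\mathcal{L}(\mathbb{C}^{d^2-1})\to\mathcal{L}(\mathbb{C}^d)$ be $\mathcal{N}^V_{d^2-1}(\rho)=\operatorname{Tr}_E(V\rho V^\dagger)$ (trace over the second factor). Then $M_{k_d}\in\mathcal{P}^{(d^2-1)\to(d^2-1)}_{\min}(\mathcal{N}^V_{d^2-1},V)$, and consequently $\mathcal{P}^{(d^2-1)\to(d^2-1)}_{\min}(\mathcal{N}^V_{d^2-1},V)\not\subseteq\mathcal{P}^{(d^2-1)\to(d^2-1)}(\mathcal{Q}_{\tilde d})$ for every $\tilde d<d^2-1$; i.e. minimal environment assistance optimally unlocks the encoding strength of $\mathcal{N}^V_{d^2-1}$.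
   Context: $M_{k_d}=M_\Sigma\oplus\mathbb{I}_{d(d-1)}$, where $M_\Sigma$ is the $(d-1)\times(d-1)$ lower-triangular matrix with $(M_\Sigma)_{ij}=0$ for $j>i$, $(M_\Sigma)_{i1}=\frac2{i(i+1)}$, $(M_\Sigma)_{ij}=\frac1{i(i+1)}$ for $1<j<i$, and $(M_\Sigma)_{ii}=\frac{i}{i+1}$ for $i>1$. $\mathcal{P}^{n\to m}(\mathcal{Q}_d)$ is the set of $n\times m$ matrices $P_{ij}=\operatorname{Tr}[\Lambda_j\rho_i]$ with $\rho_i$ density matrices on $\mathbb{C}^d$ and $\{\Lambda_j\}$ a POVM on $\mathbb{C}^d$. For a channel $\mathcal{N}$ with isometry $V:\mathbb{C}^{d_A}\to\mathbb{C}^{d_B}\otimes\mathbb{C}^{d_E}$ (first factor receiver, second environment), $\mathcal{P}^{n\to m}_{\min}(\mathcal{N},V)$ is the set of $n\times m$ matrices $P_{ij}=\sum_{l,k}q(j\mid l,k)\operatorname{Tr}[(\Lambda^B_l\otimes\Lambda^E_k)V\rho_iV^\dagger]$, where $\rho_i$ are density matrices on $\mathbb{C}^{d_A}$, $\{\Lambda^B_l\}$, $\{\Lambda^E_k\}$ are finite-outcome POVMs on $\mathbb{C}^{d_B}$, $\mathbb{C}^{d_E}$ chosen independently, and $q(\cdot\mid l,k)$ is a probability distribution on $\{1,\dots,m\}$. *)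

theory Defs
  imports "Jordan_Normal_Form.Schur_Decomposition"
begin

(* Conventions: C^d_B (x) C^d_E is identified with C^(d_B*d_E) via |a> (x) |b>  |->  e_(a*d_E+b);
   the first tensor factor is the receiver B, the second the environment E. *)

definition cinner :: "complex vec \<Rightarrow> complex vec \<Rightarrow> complex" where
  "cinner v w = (\<Sum>i<dim_vec v. cnj (v $ i) * w $ i)"

definition mtrace :: "complex mat \<Rightarrow> complex" where
  "mtrace A = (\<Sum>i<dim_row A. A $$ (i, i))"

definition psd :: "nat \<Rightarrow> complex mat \<Rightarrow> bool" where
  "psd n A \<longleftrightarrow> A \<in> carrier_mat n n \<and> mat_adjoint A = A \<and>
     (\<forall>v \<in> carrier_vec n. 0 \<le> Re (cinner v (A *\<^sub>v v)))"

definition density :: "nat \<Rightarrow> complex mat \<Rightarrow> bool" where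
  "density n \<rho> \<longleftrightarrow> psd n \<rho> \<and> mtrace \<rho> = 1"

definition povm :: "nat \<Rightarrow> (nat \<Rightarrow> complex mat) \<Rightarrow> nat \<Rightarrow> bool" where
  "povm n \<Lambda> m \<longleftrightarrow> (\<forall>j<m. psd n (\<Lambda> j)) \<and>
     (\<forall>a<n. \<forall>b<n. (\<Sum>j<m. \<Lambda> j $$ (a, b)) = (if a = b then 1 else 0))"

definition tensor_mat :: "complex mat \<Rightarrow> complex mat \<Rightarrow> complex mat" where
  "tensor_mat A B = mat (dim_row A * dim_row B) (dim_col A * dim_col B)
     (\<lambda>(i, j). A $$ (i div dim_row B, j div dim_col B) * B $$ (i mod dim_row B, j mod dim_col B))"

definition phi_plus :: "nat \<Rightarrow> complex vec" where
  "phi_plus d = vec (d * d) (\<lambda>i. if i div d = i mod d then complex_of_real (1 / sqrt (real d)) else 0)"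

definition isometry :: "nat \<Rightarrow> nat \<Rightarrow> complex mat \<Rightarrow> bool" where
  "isometry dA dOut V \<longleftrightarrow> V \<in> carrier_mat dOut dA \<and> mat_adjoint V * V = 1\<^sub>m dA"

definition channel_of_isometry :: "complex mat \<Rightarrow> nat \<Rightarrow> nat \<Rightarrow> complex mat \<Rightarrow> complex mat" where
  "channel_of_isometry V dB dE \<rho> =
     (let X = V * \<rho> * mat_adjoint V in mat dB dB (\<lambda>(a, b). \<Sum>e<dE. X $$ (a * dE + e, b * dE + e)))"

definition P_Q :: "nat \<Rightarrow> nat \<Rightarrow> nat \<Rightarrow> real mat set" where
  "P_Q d n m = {P. P \<in> carrier_mat n m \<and>
     (\<exists>\<rho> \<Lambda>. (\<forall>i<n. density d (\<rho> i)) \<and> povm d \<Lambda> m \<and>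
        (\<forall>i<n. \<forall>j<m. complex_of_real (P $$ (i, j)) = mtrace (\<Lambda> j * \<rho> i)))}"

text \<open>P^{n->m}_min(N, V) for N = channel_of_isometry V dB dE (the set depends on N only via V);
  input dimension dA = dim_col V.\<close>
definition P_min :: "complex mat \<Rightarrow> nat \<Rightarrow> nat \<Rightarrow> nat \<Rightarrow> nat \<Rightarrow> real mat set" where
  "P_min V dB dE n m = {P. P \<in> carrier_mat n m \<and>
     (\<exists>\<rho> L \<Lambda>B K \<Lambda>E q. (\<forall>i<n. density (dim_col V) (\<rho> i)) \<and> povm dB \<Lambda>B L \<and> povm dE \<Lambda>E K \<and>
        (\<forall>l<L. \<forall>k<K. (\<forall>j<m. 0 \<le> q j l k) \<and> (\<Sum>j<m. q j l k) = (1::real)) \<and>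
        (\<forall>i<n. \<forall>j<m. complex_of_real (P $$ (i, j)) =
           (\<Sum>l<L. \<Sum>k<K. complex_of_real (q j l k) *
              mtrace (tensor_mat (\<Lambda>B l) (\<Lambda>E k) * V * \<rho> i * mat_adjoint V))))}"

text \<open>M_{k_d} = M_Sigma (+) I_{d(d-1)}, 0-based indices (row i, column j correspond to i+1, j+1).\<close>
definition M_Sigma_entry :: "nat \<Rightarrow> nat \<Rightarrow> real" where
  "M_Sigma_entry I J =
     (if J > I then 0
      else if J = 1 then 2 / (real I * (real I + 1))
      else if J = I then real I / (real I + 1)
      else 1 / (real I * (real I + 1)))"

definition M_kd :: "nat \<Rightarrow> real mat" where
  "M_kd d = mat (d\<^sup>2 - 1) (d\<^sup>2 - 1) (\<lambda>(i, j).
     if i < d - 1 \<and> j < d - 1 then M_Sigma_entry (i + 1) (j + 1)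
     else if d - 1 \<le> i \<and> d - 1 \<le> j then (if i = j then 1 else 0)
     else 0)"

end

theory Submission
  imports Defs
begin


lemma mult_entry:
  assumes "A \<in> carrier_mat l m" "B \<in> carrier_mat m k" "i < l" "j < k"
  shows "(A * B) $$ (i, j) = (\<Sum>x<m. A $$ (i, x) * B $$ (x, j))"
  using assms by (auto simp: scalar_prod_def lessThan_atLeast0)

lemma adj_dims[simp]: "dim_row (mat_adjoint A) = dim_col A" "dim_col (mat_adjoint A) = dim_row A"
  by (auto simp: mat_adjoint_def)

lemma adj_entry[simp]: "i < dim_col A \<Longrightarrow> j < dim_row A \<Longrightarrow> mat_adjoint A $$ (i, j) = cnj (A $$ (j, i))"
  by (auto simp: mat_adjoint_def mat_of_rows_def)

lemma adj_carrier: "A \<in> carrier_mat m n \<Longrightarrow> mat_adjoint A \<in> carrier_mat n m"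
  by auto

lemma sum_split_prod: "(\<Sum>r<d*e. f r) = (\<Sum>a<d. \<Sum>b<e. f (a*e+b::nat))"
proof (induction d)
  case 0 then show ?case by simp
next
  case (Suc d)
  have eq: "{..<Suc d * e} = {..<d*e} \<union> {d*e..<d*e+e}" by auto
  have "(\<Sum>r<Suc d*e. f r) = (\<Sum>r\<in>{..<d*e} \<union> {d*e..<d*e+e}. f r)" by (simp only: eq)
  also have "\<dots> = (\<Sum>r<d*e. f r) + (\<Sum>r\<in>{d*e..<d*e+e}. f r)"
    by (rule sum.union_disjoint) auto
  also have "(\<Sum>r\<in>{d*e..<d*e+e}. f r) = (\<Sum>b<e. f (d*e+b))"
    by (rule sum.reindex_bij_witness[of _ "\<lambda>b. d*e+b" "\<lambda>r. r - d*e"]) auto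
  finally show ?case using Suc by simp
qed

lemma cinner_qf:
  assumes "v \<in> carrier_vec n" "A \<in> carrier_mat n n"
  shows "cinner v (A *\<^sub>v v) = (\<Sum>a<n. \<Sum>b<n. cnj (v$a) * A$$(a,b) * v$b)"
  using assms by (auto simp: cinner_def scalar_prod_def lessThan_atLeast0 sum_distrib_left mult.assoc)


definition sq :: "nat \<Rightarrow> complex mat \<Rightarrow> (nat \<Rightarrow> complex) \<Rightarrow> (nat \<Rightarrow> complex) \<Rightarrow> complex" where
  "sq n A u v = (\<Sum>a<n. \<Sum>b<n. cnj (u a) * A$$(a,b) * v b)"

lemma sq_expand:
  "sq n A (\<lambda>a. f a + \<mu> * g a) (\<lambda>a. f a + \<mu> * g a) =
   sq n A f f + \<mu> * sq n A f g + cnj \<mu> * sq n A g f + \<mu> * cnj \<mu> * sq n A g g"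
  by (simp add: sq_def algebra_simps sum.distrib sum_distrib_left)

lemma psd_sq: assumes "psd n A" shows "0 \<le> Re (sq n A v v)"
proof -
  have "A \<in> carrier_mat n n" using assms by (auto simp: psd_def)
  moreover have "vec n v \<in> carrier_vec n" by auto
  ultimately have "cinner (vec n v) (A *\<^sub>v vec n v) = sq n A v v"
    by (subst cinner_qf) (auto simp: sq_def)
  moreover have "0 \<le> Re (cinner (vec n v) (A *\<^sub>v vec n v))"
    using assms \<open>vec n v \<in> carrier_vec n\<close> unfolding psd_def by blast
  ultimately show ?thesis by simp
qed

lemma psd_herm: assumes "psd n A" "a < n" "b < n" shows "A $$ (a,b) = cnj (A $$ (b,a))"
proof -
  have A: "A \<in> carrier_mat n n" "mat_adjoint A = A" using assms by (auto simp: psd_def)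
  have "mat_adjoint A $$ (a,b) = cnj (A $$ (b,a))" using A(1) assms(2,3) by (intro adj_entry) auto
  then show ?thesis unfolding A(2) .
qed

lemma sq_herm_swap: assumes "psd n A" shows "sq n A u v = cnj (sq n A v u)"
proof -
  have "sq n A u v = (\<Sum>b<n. \<Sum>a<n. cnj (u a) * A$$(a,b) * v b)"
    unfolding sq_def by (rule sum.swap)
  also have "\<dots> = (\<Sum>b<n. \<Sum>a<n. cnj (cnj (v b) * A$$(b,a) * u a))"
  proof (rule sum.cong[OF refl], rule sum.cong[OF refl])
    fix b a assume "b \<in> {..<n}" "a \<in> {..<n}"
    then have "A$$(a,b) = cnj (A$$(b,a))" by (intro psd_herm[OF assms]) auto
    then show "cnj (u a) * A$$(a,b) * v b = cnj (cnj (v b) * A$$(b,a) * u a)" by simp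
  qed
  also have "\<dots> = cnj (sq n A v u)" unfolding sq_def cnj_sum by simp
  finally show ?thesis .
qed

lemma psd_zero:
  assumes "psd n A" "Re (sq n A w w) = 0"
  shows "\<forall>a<n. (\<Sum>b<n. A$$(a,b) * w b) = 0"
proof -
  define z where "z a = (\<Sum>b<n. A$$(a,b) * w b)" for a
  define S where "S = (\<Sum>a<n. (cmod (z a))\<^sup>2)"
  define R where "R = Re (sq n A z z)"
  have R0: "0 \<le> R" using psd_sq[OF assms(1)] by (simp add: R_def)
  have S0: "0 \<le> S" by (simp add: S_def sum_nonneg)
  have zw: "sq n A z w = (\<Sum>a<n. cnj (z a) * z a)"
    by (simp add: sq_def z_def sum_distrib_left mult.assoc)
  have reS: "Re (\<Sum>a<n. cnj (z a) * z a) = S"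
    by (simp add: S_def cmod_def power2_eq_square)
  have wz: "sq n A w z = cnj (sq n A z w)" by (rule sq_herm_swap[OF assms(1)])
  have key: "0 \<le> - 2 * t * S + t * t * R" for t :: real
  proof -
    have "0 \<le> Re (sq n A (\<lambda>a. w a + complex_of_real (-t) * z a) (\<lambda>a. w a + complex_of_real (-t) * z a))"
      by (rule psd_sq[OF assms(1)])
    also have "\<dots> = - 2 * t * S + t * t * R"
      unfolding sq_expand wz zw using assms(2) reS by (simp add: R_def)
    finally show ?thesis .
  qed
  have "S = 0"
  proof (rule ccontr)
    assume "S \<noteq> 0" then have Sp: "S > 0" using S0 by simp
    define t where "t = S / (R + 1)"
    have tp: "t > 0" using Sp R0 by (simp add: t_def)
    have "0 \<le> - 2 * t * S + t * t * R" by (rule key)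
    then have "0 \<le> t * (- 2 * S + t * R)" by (simp add: algebra_simps)
    then have "0 \<le> - 2 * S + t * R" using tp by (simp add: zero_le_mult_iff)
    moreover have "t * R < S" using Sp R0 by (simp add: t_def field_simps)
    ultimately show False using Sp by simp
  qed
  then have "\<forall>a<n. (cmod (z a))\<^sup>2 = 0"
    using sum_nonneg_eq_0_iff[of "{..<n}" "\<lambda>a. (cmod (z a))\<^sup>2"] by (simp add: S_def)
  then show ?thesis by (simp add: z_def)
qed


definition dl :: "nat \<Rightarrow> nat \<Rightarrow> complex" where "dl k a = (if a = k then 1 else 0)"

lemma ifm1: "(if P then x else y) * (z::complex) = (if P then x * z else y * z)" by simp
lemma ifm2: "(z::complex) * (if P then x else y) = (if P then z * x else z * y)" by simp
lemma sum_if_const: "(\<Sum>b\<in>B. if P then g b else (0::complex)) = (if P then sum g B else 0)" by (cases P) simp_all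
lemma cnj_if: "cnj (if P then x else y) = (if P then cnj x else cnj y)" by simp

lemma sq_dl_dl: "k < n \<Longrightarrow> sq n A (dl k) (dl k) = A$$(k,k)"
  by (simp add: sq_def dl_def ifm1 ifm2 cnj_if sum_if_const cong: if_cong)

lemma sq_f_dl: "k < n \<Longrightarrow> sq n A f (dl k) = (\<Sum>a<n. cnj (f a) * A$$(a,k))"
  by (simp add: sq_def dl_def ifm1 ifm2 cnj_if sum_if_const cong: if_cong)

lemma sq_dl_f: "k < n \<Longrightarrow> sq n A (dl k) f = (\<Sum>b<n. A$$(k,b) * f b)"
  by (simp add: sq_def dl_def ifm1 ifm2 cnj_if sum_if_const cong: if_cong)

lemma psd_diag_zero:
  assumes "psd n A" "k < n" "A$$(k,k) = 0" "a < n"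
  shows "A$$(a,k) = 0" "A$$(k,a) = 0"
proof -
  have "Re (sq n A (dl k) (dl k)) = 0" using assms sq_dl_dl by simp
  from psd_zero[OF assms(1) this] assms(4)
  have "(\<Sum>b<n. A$$(a,b) * dl k b) = 0" by blast
  then show 1: "A$$(a,k) = 0" using assms(2) by (simp add: dl_def ifm1 ifm2 cnj_if sum_if_const cong: if_cong)
  have "A$$(k,a) = cnj (A$$(a,k))" by (rule psd_herm[OF assms(1)]) (use assms in auto)
  then show "A$$(k,a) = 0" using 1 by simp
qed

lemma psd_diag_real:
  assumes "psd n A" "k < n"
  shows "A$$(k,k) = complex_of_real (Re (A$$(k,k)))" "0 \<le> Re (A$$(k,k))"
proof -
  have "A$$(k,k) = cnj (A$$(k,k))" by (rule psd_herm[OF assms(1)]) (use assms in auto)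
  then have "Im (A$$(k,k)) = 0" by (metis Reals_cnj_iff complex_is_Real_iff)
  then show "A$$(k,k) = complex_of_real (Re (A$$(k,k)))" by (simp add: complex_eq_iff)
  show "0 \<le> Re (A$$(k,k))" using psd_sq[OF assms(1), of "dl k"] sq_dl_dl[OF assms(2)] by simp
qed

lemma psd_from_sq:
  assumes "B \<in> carrier_mat n n" "\<And>a b. a < n \<Longrightarrow> b < n \<Longrightarrow> B$$(a,b) = cnj (B$$(b,a))"
    "\<And>v. 0 \<le> Re (sq n B v v)"
  shows "psd n B"
  unfolding psd_def
proof (intro conjI ballI)
  show "B \<in> carrier_mat n n" by fact
  show "mat_adjoint B = B"
    by (rule eq_matI) (use assms(1) in \<open>auto simp: assms(2)[symmetric]\<close>)
  fix v :: "complex vec" assume v: "v \<in> carrier_vec n"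
  have "cinner v (B *\<^sub>v v) = sq n B (\<lambda>a. v$a) (\<lambda>a. v$a)"
    using v assms(1) by (simp add: cinner_qf sq_def)
  then show "0 \<le> Re (cinner v (B *\<^sub>v v))" using assms(3) by simp
qed

lemma decomp_aux:
  "\<forall>B. psd n B \<and> (\<forall>a. k \<le> a \<and> a < n \<longrightarrow> B$$(a,a) = 0) \<longrightarrow>
     (\<exists>w. \<forall>a<n. \<forall>b<n. B$$(a,b) = (\<Sum>j<k. w j a * cnj (w j b)))"
proof (induction k)
  case 0
  show ?case
  proof (intro allI impI)
    fix B assume H: "psd n B \<and> (\<forall>a. 0 \<le> a \<and> a < n \<longrightarrow> B$$(a,a) = 0)"
    have "\<forall>a<n. \<forall>b<n. B$$(a,b) = 0"
    proof (intro allI impI)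
      fix a b assume ab: "a < n" "b < n"
      have "B$$(b,b) = 0" using H ab by auto
      then show "B$$(a,b) = 0" using psd_diag_zero(1)[of n B b a] H ab by auto
    qed
    then show "\<exists>w. \<forall>a<n. \<forall>b<n. B$$(a,b) = (\<Sum>j<(0::nat). w j a * cnj (w j b))" by (simp add: lessThan_0)
  qed
next
  case (Suc k)
  show ?case
  proof (intro allI impI)
    fix B assume H: "psd n B \<and> (\<forall>a. Suc k \<le> a \<and> a < n \<longrightarrow> B$$(a,a) = 0)"
    then have psdB: "psd n B" and Hd: "\<And>a. Suc k \<le> a \<Longrightarrow> a < n \<Longrightarrow> B$$(a,a) = 0" by auto
    have Bc: "B \<in> carrier_mat n n" using psdB by (auto simp: psd_def)
    show "\<exists>w. \<forall>a<n. \<forall>b<n. B$$(a,b) = (\<Sum>j<Suc k. w j a * cnj (w j b))"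
    proof (cases "k < n \<and> B$$(k,k) \<noteq> 0")
      case False
      then have "\<forall>a. k \<le> a \<and> a < n \<longrightarrow> B$$(a,a) = 0"
      proof (intro allI impI)
        fix a assume a: "k \<le> a \<and> a < n"
        show "B$$(a,a) = 0"
        proof (cases "a = k")
          case True then show ?thesis using False a by auto
        next
          case False then show ?thesis using a Hd by auto
        qed
      qed
      with Suc.IH psdB obtain w where w: "\<forall>a<n. \<forall>b<n. B$$(a,b) = (\<Sum>j<k. w j a * cnj (w j b))" by blast
      define w' where "w' = w(k := (\<lambda>_. 0))"
      have "\<forall>a<n. \<forall>b<n. B$$(a,b) = (\<Sum>j<Suc k. w' j a * cnj (w' j b))"
      proof (intro allI impI)
        fix a b assume ab: "a < n" "b < n"
        have "(\<Sum>j<Suc k. w' j a * cnj (w' j b)) = (\<Sum>j<k. w' j a * cnj (w' j b))"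
          by (simp add: w'_def)
        also have "\<dots> = (\<Sum>j<k. w j a * cnj (w j b))"
          by (rule sum.cong) (auto simp: w'_def)
        finally show "B$$(a,b) = (\<Sum>j<Suc k. w' j a * cnj (w' j b))" using w ab by simp
      qed
      then show ?thesis by blast
    next
      case True
      then have kn: "k < n" and Bkk0: "B$$(k,k) \<noteq> 0" by auto
      define c where "c = Re (B$$(k,k))"
      have Bkk: "B$$(k,k) = complex_of_real c" unfolding c_def by (rule psd_diag_real(1)[OF psdB kn])
      have c0: "0 \<le> c" unfolding c_def by (rule psd_diag_real(2)[OF psdB kn])
      have "c \<noteq> 0" using Bkk0 Bkk by auto
      then have cpos: "c > 0" using c0 by simp
      define s where "s = complex_of_real (sqrt c)"
      have s0: "s \<noteq> 0" using cpos by (simp add: s_def)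
      have ss: "s * s = complex_of_real c" using cpos
        by (simp add: s_def flip: of_real_mult)
      have cs: "cnj s = s" by (simp add: s_def)
      define u where "u a = B$$(a,k) / s" for a
      define B' where "B' = mat n n (\<lambda>(a,b). B$$(a,b) - u a * cnj (u b))"
      have B'e: "B'$$(a,b) = B$$(a,b) - u a * cnj (u b)" if "a < n" "b < n" for a b
        using that by (simp add: B'_def)
      have herm: "B$$(a,b) = cnj (B$$(b,a))" if "a < n" "b < n" for a b
        by (rule psd_herm[OF psdB]) (use that in auto)
      have psdB': "psd n B'"
      proof (rule psd_from_sq)
        show "B' \<in> carrier_mat n n" by (simp add: B'_def)
        fix a b assume ab: "a < n" "b < n"
        show "B'$$(a,b) = cnj (B'$$(b,a))"
          using ab by (simp add: B'e u_def cs herm[of a b] mult.commute)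
      next
        fix v
        define \<beta> where "\<beta> = (\<Sum>b<n. B$$(k,b) * v b)"
        define \<mu> where "\<mu> = - \<beta> / complex_of_real c"
        have sum1: "(\<Sum>b<n. cnj (u b) * v b) = \<beta> / s"
          unfolding \<beta>_def sum_divide_distrib
        proof (rule sum.cong[OF refl])
          fix b assume "b \<in> {..<n}"
          then have "B$$(k,b) = cnj (B$$(b,k))" using herm kn by blast
          then show "cnj (u b) * v b = B$$(k,b) * v b / s" by (simp add: u_def cs)
        qed
        have sum2: "(\<Sum>a<n. cnj (v a) * u a) = cnj \<beta> / s"
        proof -
          have "(\<Sum>a<n. cnj (v a) * u a) = sq n B v (dl k) / s"
            unfolding sq_f_dl[OF kn] sum_divide_distrib u_def by (simp add: mult.assoc)
          also have "sq n B v (dl k) = cnj (sq n B (dl k) v)" by (rule sq_herm_swap[OF psdB])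
          also have "sq n B (dl k) v = \<beta>" by (simp add: sq_dl_f[OF kn] \<beta>_def)
          finally show ?thesis .
        qed
        have "sq n B' v v = (\<Sum>a<n. \<Sum>b<n. cnj (v a) * B$$(a,b) * v b - (cnj (v a) * u a) * (cnj (u b) * v b))"
          unfolding sq_def by (intro sum.cong refl) (simp add: B'e algebra_simps)
        also have "\<dots> = sq n B v v - (\<Sum>a<n. cnj (v a) * u a) * (\<Sum>b<n. cnj (u b) * v b)"
          by (simp add: sq_def sum_subtractf sum_product)
        also have "\<dots> = sq n B v v - cnj \<beta> * \<beta> / complex_of_real c"
          unfolding sum1 sum2 by (simp add: ss[symmetric])
        also have "\<dots> = sq n B (\<lambda>a. v a + \<mu> * dl k a) (\<lambda>a. v a + \<mu> * dl k a)"
        proof -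
          have "sq n B v (dl k) = cnj \<beta>"
            using sq_herm_swap[OF psdB, of v "dl k"] by (simp add: sq_dl_f[OF kn] \<beta>_def)
          moreover have "sq n B (dl k) v = \<beta>" by (simp add: sq_dl_f[OF kn] \<beta>_def)
          moreover have "sq n B (dl k) (dl k) = complex_of_real c" by (simp add: sq_dl_dl[OF kn] Bkk)
          ultimately show ?thesis unfolding sq_expand using cpos
            by (simp add: \<mu>_def field_simps)
        qed
        finally show "0 \<le> Re (sq n B' v v)" using psd_sq[OF psdB] by simp
      qed
      have diag': "\<forall>a. k \<le> a \<and> a < n \<longrightarrow> B'$$(a,a) = 0"
      proof (intro allI impI)
        fix a assume a: "k \<le> a \<and> a < n"
        show "B'$$(a,a) = 0"
        proof (cases "a = k")
          case True
          have "u k * cnj (u k) = B$$(k,k) * B$$(k,k) / (s * s)" by (simp add: u_def cs Bkk)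
          then show ?thesis using True kn by (simp add: B'e ss Bkk cpos)
        next
          case False
          then have "Suc k \<le> a" using a by simp
          then have "B$$(a,a) = 0" using Hd a by simp
          then have "B$$(a,k) = 0" using psd_diag_zero(2)[OF psdB _ _ kn] a by blast
          then show ?thesis using a by (simp add: B'e u_def \<open>B$$(a,a) = 0\<close>)
        qed
      qed
      from Suc.IH psdB' diag' obtain w where w: "\<forall>a<n. \<forall>b<n. B'$$(a,b) = (\<Sum>j<k. w j a * cnj (w j b))" by blast
      define w' where "w' = w(k := u)"
      have "\<forall>a<n. \<forall>b<n. B$$(a,b) = (\<Sum>j<Suc k. w' j a * cnj (w' j b))"
      proof (intro allI impI)
        fix a b assume ab: "a < n" "b < n"
        have "(\<Sum>j<Suc k. w' j a * cnj (w' j b)) = (\<Sum>j<k. w' j a * cnj (w' j b)) + u a * cnj (u b)"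
          by (simp add: w'_def)
        also have "(\<Sum>j<k. w' j a * cnj (w' j b)) = (\<Sum>j<k. w j a * cnj (w j b))"
          by (rule sum.cong) (auto simp: w'_def)
        finally show "B$$(a,b) = (\<Sum>j<Suc k. w' j a * cnj (w' j b))" using w ab B'e[OF ab] by simp
      qed
      then show ?thesis by blast
    qed
  qed
qed

lemma psd_decomp:
  assumes "psd n B"
  shows "\<exists>w. \<forall>a<n. \<forall>b<n. B$$(a,b) = (\<Sum>j<n. w j a * cnj (w j b))"
  using decomp_aux[of n n] assms by auto


lemma trace_decomp:
  assumes A: "A \<in> carrier_mat n n" and R: "R \<in> carrier_mat n n"
    and w: "\<forall>a<n. \<forall>b<n. R$$(a,b) = (\<Sum>j<m. w j a * cnj (w j b))"
  shows "mtrace (A * R) = (\<Sum>j<m. sq n A (w j) (w j))"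
proof -
  have "mtrace (A * R) = (\<Sum>a<n. (A * R)$$(a,a))"
    unfolding mtrace_def using A R by simp
  also have "\<dots> = (\<Sum>a<n. \<Sum>c<n. A$$(a,c) * R$$(c,a))"
    by (intro sum.cong refl) (simp add: mult_entry[OF A R])
  also have "\<dots> = (\<Sum>a<n. \<Sum>c<n. \<Sum>j<m. cnj (w j a) * A$$(a,c) * w j c)"
    by (intro sum.cong refl) (simp add: w sum_distrib_left mult.commute mult.left_commute)
  also have "\<dots> = (\<Sum>a<n. \<Sum>j<m. \<Sum>c<n. cnj (w j a) * A$$(a,c) * w j c)"
    by (intro sum.cong refl) (rule sum.swap)
  also have "\<dots> = (\<Sum>j<m. \<Sum>a<n. \<Sum>c<n. cnj (w j a) * A$$(a,c) * w j c)"
    by (rule sum.swap)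
  finally show ?thesis by (simp add: sq_def)
qed

lemma sum_if_lt: "dt \<le> (n::nat) \<Longrightarrow> (\<Sum>c<n. if c < dt then h c else 0) = (\<Sum>c<dt. h c)"
proof -
  assume "dt \<le> n"
  then have "{c \<in> {..<n}. c < dt} = {..<dt}" by auto
  then show ?thesis using sum.inter_filter[of "{..<n}" h "\<lambda>c. c < dt"] by simp
qed

lemma dim_bound:
  fixes P :: "real mat"
  assumes rho: "\<forall>i<n. psd dt (\<rho> i)" and lam: "\<forall>j<n. psd dt (\<Lambda> j)"
    and tr: "\<forall>i<n. \<forall>j<n. complex_of_real (P$$(i,j)) = mtrace (\<Lambda> j * \<rho> i)"
    and diag: "\<forall>i<n. P$$(i,i) \<noteq> 0" and up: "\<forall>i j. i < j \<longrightarrow> j < n \<longrightarrow> P$$(i,j) = 0"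
  shows "n \<le> dt"
proof (rule ccontr)
  assume "\<not> n \<le> dt" then have dtn: "dt < n" by simp
  have "\<forall>i. \<exists>w. i < n \<longrightarrow> (\<forall>a<dt. \<forall>b<dt. \<rho> i $$(a,b) = (\<Sum>k<dt. w k a * cnj (w k b)))"
    using psd_decomp rho by blast
  then obtain W where W: "\<And>i. i < n \<Longrightarrow> \<forall>a<dt. \<forall>b<dt. \<rho> i $$(a,b) = (\<Sum>k<dt. W i k a * cnj (W i k b))"
    by metis
  have trW: "mtrace (\<Lambda> j * \<rho> i) = (\<Sum>k<dt. sq dt (\<Lambda> j) (W i k) (W i k))" if "i < n" "j < n" for i j
    by (rule trace_decomp) (use that lam rho W in \<open>auto simp: psd_def\<close>)
  have "\<exists>k<dt. sq dt (\<Lambda> i) (W i k) (W i k) \<noteq> 0" if "i < n" for i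
  proof (rule ccontr)
    assume "\<not> ?thesis"
    then have "mtrace (\<Lambda> i * \<rho> i) = 0" using trW[OF that that] by simp
    then show False using tr diag that by force
  qed
  then obtain kk where kk: "\<And>i. i < n \<Longrightarrow> kk i < dt \<and> sq dt (\<Lambda> i) (W i (kk i)) (W i (kk i)) \<noteq> 0"
    by metis
  define v where "v i = W i (kk i)" for i
  have vdiag: "sq dt (\<Lambda> i) (v i) (v i) \<noteq> 0" if "i < n" for i using kk[OF that] by (simp add: v_def)
  have vzero: "\<forall>a<dt. (\<Sum>b<dt. \<Lambda> j $$(a,b) * v i b) = 0" if ij: "i < j" "j < n" for i j
  proof -
    have i: "i < n" using ij by simp
    have "(\<Sum>k<dt. sq dt (\<Lambda> j) (W i k) (W i k)) = 0"
    proof -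
      have "P$$(i,j) = 0" using up ij by blast
      moreover have "complex_of_real (P$$(i,j)) = mtrace (\<Lambda> j * \<rho> i)" using tr i ij(2) by blast
      ultimately show ?thesis using trW[OF i ij(2)] by simp
    qed
    then have "(\<Sum>k<dt. Re (sq dt (\<Lambda> j) (W i k) (W i k))) = 0"
      unfolding Re_sum[symmetric] by simp
    moreover have "\<forall>k\<in>{..<dt}. 0 \<le> Re (sq dt (\<Lambda> j) (W i k) (W i k))"
      using psd_sq[of dt "\<Lambda> j"] lam ij by simp
    ultimately have "\<forall>k\<in>{..<dt}. Re (sq dt (\<Lambda> j) (W i k) (W i k)) = 0"
      using sum_nonneg_eq_0_iff[of "{..<dt}" "\<lambda>k. Re (sq dt (\<Lambda> j) (W i k) (W i k))"] by simp
    then have "Re (sq dt (\<Lambda> j) (v i) (v i)) = 0" using kk[OF i] by (simp add: v_def)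
    moreover have "psd dt (\<Lambda> j)" using lam ij by simp
    ultimately show ?thesis using psd_zero[of dt "\<Lambda> j" "v i"] by simp
  qed
  define X where "X = mat n n (\<lambda>(j,c). if c < dt then (\<Sum>a<dt. cnj (v j a) * \<Lambda> j $$(a,c)) else 0)"
  define Y where "Y = mat n n (\<lambda>(c,i). if c < dt then v i c else 0)"
  have Xc: "X \<in> carrier_mat n n" and Yc: "Y \<in> carrier_mat n n" by (auto simp: X_def Y_def)
  have Z: "(X * Y)$$(j,i) = sq dt (\<Lambda> j) (v j) (v i)" if "j < n" "i < n" for i j
  proof -
    have "(X * Y)$$(j,i) = (\<Sum>c<n. if c < dt then (\<Sum>a<dt. cnj (v j a) * \<Lambda> j $$(a,c)) * v i c else 0)"
      by (subst mult_entry[OF Xc Yc that]) (intro sum.cong refl, use that in \<open>auto simp: X_def Y_def\<close>)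
    also have "\<dots> = (\<Sum>c<dt. (\<Sum>a<dt. cnj (v j a) * \<Lambda> j $$(a,c)) * v i c)"
      using dtn by (simp add: sum_if_lt)
    also have "\<dots> = sq dt (\<Lambda> j) (v j) (v i)"
      unfolding sq_def sum_distrib_right by (rule sum.swap)
    finally show ?thesis .
  qed
  have XYc: "X * Y \<in> carrier_mat n n" using Xc Yc by simp
  have ut: "upper_triangular (X * Y)"
    unfolding upper_triangular_def
  proof (intro allI impI)
    fix j i assume j: "j < dim_row (X * Y)" and ij: "i < j"
    then have jn: "j < n" using Xc by simp
    have "sq dt (\<Lambda> j) (v j) (v i) = (\<Sum>a<dt. cnj (v j a) * (\<Sum>b<dt. \<Lambda> j $$(a,b) * v i b))"
      by (simp add: sq_def sum_distrib_left mult.assoc)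
    also have "\<dots> = 0" using vzero[OF ij jn] by simp
    finally show "(X * Y) $$ (j, i) = 0" using Z[OF jn] ij jn by simp
  qed
  have "det (X * Y) = (\<Prod>i = 0..<n. (X * Y) $$ (i, i))"
    using det_upper_triangular[OF ut XYc] Xc by (simp add: prod_list_diag_prod)
  also have "\<dots> \<noteq> 0" using Z vdiag by (simp add: prod_zero_iff)
  finally have detne: "det (X * Y) \<noteq> 0" .
  have "X *\<^sub>v unit_vec n (n - 1) = 0\<^sub>v n"
    using dtn Xc by (intro eq_vecI) (auto simp: X_def)
  moreover have n0: "n - 1 < n" using dtn by simp
  ultimately have "det X = 0"
    by (subst det_0_iff_vec_prod_zero_field[OF Xc]) (intro exI[of _ "unit_vec n (n-1)"], auto)
  then show False using detne det_mult[OF Xc Yc] by simp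
qed


definition phr :: "nat \<Rightarrow> nat \<Rightarrow> real" where
  "phr d r = (if r div d = r mod d then 1 / sqrt (real d) else 0)"

lemma phi_entry: "r < d * d \<Longrightarrow> phi_plus d $ r = complex_of_real (phr d r)"
  by (simp add: phi_plus_def phr_def)

lemma phr_diag: "x < d \<Longrightarrow> y < d \<Longrightarrow> phr d (x * d + y) = (if x = y then 1 / sqrt (real d) else 0)"
  by (simp add: phr_def)

lemma phr_norm: "0 < d \<Longrightarrow> (\<Sum>r<d*d. (phr d r)\<^sup>2) = 1"
proof -
  assume d: "0 < d"
  have "(\<Sum>r<d*d. (phr d r)\<^sup>2) = (\<Sum>x<d. \<Sum>y<d. (phr d (x*d+y))\<^sup>2)" by (rule sum_split_prod)
  also have "\<dots> = (\<Sum>x<d. \<Sum>y<d. if x = y then 1 / real d else 0)"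
    by (intro sum.cong refl) (simp add: phr_diag power_divide)
  also have "\<dots> = (\<Sum>x<d. 1 / real d)" by simp
  also have "\<dots> = 1" using d by simp
  finally show ?thesis .
qed

locale thm3_setup =
  fixes d :: nat and V :: "complex mat"
  assumes d3: "d \<ge> 3"
    and iso: "isometry (d\<^sup>2 - 1) (d * d) V"
    and orth: "\<forall>v \<in> carrier_vec (d\<^sup>2 - 1). cinner (phi_plus d) (V *\<^sub>v v) = 0"
begin

definition n :: nat where "n = d\<^sup>2 - 1"
abbreviation "N \<equiv> d * d"

lemma N_Suc: "N = Suc n"
  using d3 by (simp add: power2_eq_square n_def)

lemma lt_N[simp]: "c < n \<Longrightarrow> c < N" using N_Suc by simp
lemma n_lt_N[simp]: "n < N" using N_Suc by simp


lemma Vc: "V \<in> carrier_mat N n" using iso by (simp add: isometry_def n_def)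
lemma VV: "mat_adjoint V * V = 1\<^sub>m n" using iso by (simp add: isometry_def n_def)

lemma orth_col: "c < n \<Longrightarrow> (\<Sum>r<N. complex_of_real (phr d r) * V$$(r,c)) = 0"
proof -
  assume c: "c < n"
  have "cinner (phi_plus d) (V *\<^sub>v unit_vec n c) = 0" using orth c by (auto simp: n_def)
  moreover have "cinner (phi_plus d) (V *\<^sub>v unit_vec n c) = (\<Sum>r<N. complex_of_real (phr d r) * V$$(r,c))"
    unfolding cinner_def using Vc c
    by (intro sum.cong) (auto simp: phi_plus_def phi_entry[symmetric] row_def)
  ultimately show ?thesis by simp
qed

definition U :: "complex mat" where
  "U = mat N N (\<lambda>(r,c). if c < n then V$$(r,c) else complex_of_real (phr d r))"

lemma Uc: "U \<in> carrier_mat N N" by (simp add: U_def)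

lemma UU: "mat_adjoint U * U = 1\<^sub>m N"
proof (rule eq_matI)
  fix c c' assume c: "c < dim_row (1\<^sub>m N)" and c': "c' < dim_col (1\<^sub>m N)"
  then have cN: "c < N" "c' < N" by auto
  have e: "(mat_adjoint U * U)$$(c,c') = (\<Sum>r<N. cnj (U$$(r,c)) * U$$(r,c'))"
    using cN Uc by (subst mult_entry[of _ N N _ N]) auto
  show "(mat_adjoint U * U)$$(c,c') = 1\<^sub>m N $$ (c,c')"
  proof (cases "c < n")
    case True note cn = this
    show ?thesis
    proof (cases "c' < n")
      case True
      have "(\<Sum>r<N. cnj (U$$(r,c)) * U$$(r,c')) = (mat_adjoint V * V)$$(c,c')"
        using cn True Vc cN by (subst mult_entry[of _ n N _ n]) (auto simp: U_def)
      then show ?thesis using e VV cn True cN by simp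
    next
      case False
      then have c'n: "c' = n" using cN N_Suc by simp
      have "(\<Sum>r<N. cnj (U$$(r,c)) * U$$(r,c')) = cnj (\<Sum>r<N. complex_of_real (phr d r) * V$$(r,c))"
        using cn c'n by (auto simp: U_def intro!: sum.cong)
      then show ?thesis using e orth_col[OF cn] cn c'n by simp
    qed
  next
    case False
    then have cn: "c = n" using cN N_Suc by simp
    show ?thesis
    proof (cases "c' < n")
      case True
      have "(\<Sum>r<N. cnj (U$$(r,c)) * U$$(r,c')) = (\<Sum>r<N. complex_of_real (phr d r) * V$$(r,c'))"
        using cn True by (auto simp: U_def intro!: sum.cong)
      then show ?thesis using e orth_col[OF True] cn True by simp
    next
      case False
      then have c'n: "c' = n" using cN N_Suc by simp
      have "(\<Sum>r<N. cnj (U$$(r,c)) * U$$(r,c')) = complex_of_real (\<Sum>r<N. (phr d r)\<^sup>2)"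
        using cn c'n by (auto simp: U_def power2_eq_square intro!: sum.cong)
      also have "\<dots> = 1" using phr_norm d3 by simp
      finally show ?thesis using e cn c'n N_Suc by simp
    qed
  qed
qed (auto simp: U_def)

lemma G: assumes "r < N" "r' < N"
  shows "(\<Sum>c<n. V$$(r,c) * cnj (V$$(r',c))) = (if r = r' then 1 else 0) - complex_of_real (phr d r * phr d r')"
proof -
  have UU': "U * mat_adjoint U = 1\<^sub>m N"
    by (rule mat_mult_left_right_inverse[OF _ Uc UU]) (use Uc in auto)
  have "(U * mat_adjoint U)$$(r,r') = (\<Sum>c<N. U$$(r,c) * cnj (U$$(r',c)))"
    using assms Uc by (subst mult_entry[of _ N N _ N]) auto
  also have "\<dots> = (\<Sum>c<n. U$$(r,c) * cnj (U$$(r',c))) + U$$(r,n) * cnj (U$$(r',n))"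
    by (simp add: N_Suc)
  also have "\<dots> = (\<Sum>c<n. V$$(r,c) * cnj (V$$(r',c))) + complex_of_real (phr d r * phr d r')"
    using assms N_Suc by (auto simp: U_def intro!: sum.cong)
  finally show ?thesis using UU' assms by simp
qed

end

context thm3_setup begin

definition uu :: "(nat \<Rightarrow> real) \<Rightarrow> nat \<Rightarrow> complex" where
  "uu \<psi> c = (\<Sum>r<N. cnj (V$$(r,c)) * complex_of_real (\<psi> r))"

definition rho :: "(nat \<Rightarrow> real) \<Rightarrow> complex mat" where
  "rho \<psi> = mat n n (\<lambda>(c,c'). uu \<psi> c * cnj (uu \<psi> c'))"

lemma V_uu:
  assumes orthp: "(\<Sum>r<N. phr d r * \<psi> r) = 0" and s: "s < N"
  shows "(\<Sum>c<n. V$$(s,c) * uu \<psi> c) = complex_of_real (\<psi> s)"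
proof -
  have "(\<Sum>c<n. V$$(s,c) * uu \<psi> c) = (\<Sum>c<n. \<Sum>r<N. V$$(s,c) * cnj (V$$(r,c)) * complex_of_real (\<psi> r))"
    by (simp add: uu_def sum_distrib_left mult.assoc)
  also have "\<dots> = (\<Sum>r<N. \<Sum>c<n. V$$(s,c) * cnj (V$$(r,c)) * complex_of_real (\<psi> r))"
    by (rule sum.swap)
  also have "\<dots> = (\<Sum>r<N. ((if s = r then 1 else 0) - complex_of_real (phr d s * phr d r)) * complex_of_real (\<psi> r))"
    by (intro sum.cong refl) (simp add: G[OF s] flip: sum_distrib_right)
  also have "\<dots> = (\<Sum>r<N. if s = r then complex_of_real (\<psi> r) else 0) - (\<Sum>r<N. complex_of_real (phr d s) * complex_of_real (phr d r * \<psi> r))"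
    by (subst sum_subtractf[symmetric]) (intro sum.cong refl, auto simp: algebra_simps)
  also have "\<dots> = complex_of_real (\<psi> s) - complex_of_real (phr d s) * complex_of_real (\<Sum>r<N. phr d r * \<psi> r)"
    using s by (simp add: sum_distrib_left)
  also have "\<dots> = complex_of_real (\<psi> s)" using orthp by simp
  finally show ?thesis .
qed

lemma rho_density:
  assumes orthp: "(\<Sum>r<N. phr d r * \<psi> r) = 0" and norm: "(\<Sum>r<N. (\<psi> r)\<^sup>2) = 1"
  shows "density n (rho \<psi>)"
  unfolding density_def
proof
  show "psd n (rho \<psi>)"
  proof (rule psd_from_sq)
    show "rho \<psi> \<in> carrier_mat n n" by (simp add: rho_def)
    fix a b assume "a < n" "b < n"
    then show "rho \<psi> $$ (a,b) = cnj (rho \<psi> $$ (b,a))" by (simp add: rho_def)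
  next
    fix v
    define z where "z = (\<Sum>a<n. cnj (v a) * uu \<psi> a)"
    have "sq n (rho \<psi>) v v = (\<Sum>a<n. \<Sum>b<n. (cnj (v a) * uu \<psi> a) * cnj (cnj (v b) * uu \<psi> b))"
      unfolding sq_def by (intro sum.cong refl) (simp add: rho_def mult_ac)
    also have "\<dots> = z * cnj z" by (simp add: z_def sum_product)
    finally have "sq n (rho \<psi>) v v = z * cnj z" .
    then show "0 \<le> Re (sq n (rho \<psi>) v v)" by (simp add: complex_mult_cnj)
  qed
  have "mtrace (rho \<psi>) = (\<Sum>c<n. cnj (uu \<psi> c) * uu \<psi> c)"
    by (simp add: mtrace_def rho_def mult.commute)
  also have "\<dots> = (\<Sum>c<n. \<Sum>r<N. V$$(r,c) * complex_of_real (\<psi> r) * uu \<psi> c)"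
    by (simp add: uu_def sum_distrib_right)
  also have "\<dots> = (\<Sum>r<N. \<Sum>c<n. V$$(r,c) * complex_of_real (\<psi> r) * uu \<psi> c)"
    by (rule sum.swap)
  also have "\<dots> = (\<Sum>r<N. complex_of_real (\<psi> r) * (\<Sum>c<n. V$$(r,c) * uu \<psi> c))"
    by (simp add: sum_distrib_left mult_ac)
  also have "\<dots> = (\<Sum>r<N. complex_of_real ((\<psi> r)\<^sup>2))"
    by (intro sum.cong refl) (simp add: V_uu[OF orthp] power2_eq_square)
  also have "\<dots> = complex_of_real (\<Sum>r<N. (\<psi> r)\<^sup>2)" by (rule of_real_sum[symmetric])
  also have "\<dots> = 1" using norm by simp
  finally show "mtrace (rho \<psi>) = 1" .
qed

lemma VrhoV:
  assumes orthp: "(\<Sum>r<N. phr d r * \<psi> r) = 0" and x: "x < N" and y: "y < N"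
  shows "(V * rho \<psi> * mat_adjoint V)$$(x,y) = complex_of_real (\<psi> x * \<psi> y)"
proof -
  have Rc: "rho \<psi> \<in> carrier_mat n n" by (simp add: rho_def)
  have VR: "V * rho \<psi> \<in> carrier_mat N n" by (rule mult_carrier_mat[OF Vc Rc])
  have Ac: "mat_adjoint V \<in> carrier_mat n N" by (rule adj_carrier[OF Vc])
  have e1: "(V * rho \<psi>)$$(x,c') = complex_of_real (\<psi> x) * cnj (uu \<psi> c')" if "c' < n" for c'
  proof -
    have "(V * rho \<psi>)$$(x,c') = (\<Sum>c<n. V$$(x,c) * (uu \<psi> c * cnj (uu \<psi> c')))"
      using that x by (subst mult_entry[OF Vc Rc]) (auto simp: rho_def)
    also have "\<dots> = (\<Sum>c<n. V$$(x,c) * uu \<psi> c) * cnj (uu \<psi> c')"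
      by (simp add: sum_distrib_right mult.assoc)
    finally show ?thesis using V_uu[OF orthp x] by simp
  qed
  have "(V * rho \<psi> * mat_adjoint V)$$(x,y) = (\<Sum>c'<n. (V * rho \<psi>)$$(x,c') * mat_adjoint V $$ (c',y))"
    using x y by (subst mult_entry[OF VR Ac]) auto
  also have "\<dots> = (\<Sum>c'<n. complex_of_real (\<psi> x) * cnj (V$$(y,c') * uu \<psi> c'))"
    using y Vc by (intro sum.cong refl) (simp add: e1)
  also have "\<dots> = complex_of_real (\<psi> x) * cnj (\<Sum>c'<n. V$$(y,c') * uu \<psi> c')"
    by (simp add: sum_distrib_left)
  also have "\<dots> = complex_of_real (\<psi> x * \<psi> y)" using V_uu[OF orthp y] by simp
  finally show ?thesis .
qed

end

definition E :: "nat \<Rightarrow> nat \<Rightarrow> complex mat" where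
  "E d l = mat d d (\<lambda>(a,b). if a = l \<and> b = l then 1 else 0)"

lemma divmod_eq: "k < d \<Longrightarrow> (t div d = l \<and> t mod d = k) \<longleftrightarrow> t = l * d + (k::nat)"
  by (metis add.commute div_mult_self1 div_less less_nat_zero_code mod_mult_self2 mod_less
        mult.commute mod_div_mult_eq add_0 mod_by_0 div_by_0 gr_implies_not0)

lemma tensor_E:
  assumes "l < d" "k < d" "t < d * d" "y < d * d"
  shows "tensor_mat (E d l) (E d k) $$ (t,y) = (if t = l*d+k \<and> y = l*d+k then 1 else 0)"
proof -
  have dv: "t div d < d" "y div d < d" using assms by (auto simp: less_mult_imp_div_less)
  have d0: "0 < d" using assms by simp
  have md: "t mod d < d" "y mod d < d" using d0 by auto
  have "tensor_mat (E d l) (E d k) $$ (t,y) = E d l $$ (t div d, y div d) * E d k $$ (t mod d, y mod d)"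
    using assms by (simp add: tensor_mat_def E_def)
  also have "\<dots> = (if (t div d = l \<and> t mod d = k) \<and> (y div d = l \<and> y mod d = k) then 1 else 0)"
    using dv md by (auto simp: E_def)
  also have "\<dots> = (if t = l*d+k \<and> y = l*d+k then 1 else 0)"
    using divmod_eq[OF assms(2)] by simp
  finally show ?thesis .
qed

lemma tensor_E_carrier: "tensor_mat (E d l) (E d k) \<in> carrier_mat (d*d) (d*d)"
  by (simp add: tensor_mat_def E_def)

context thm3_setup begin

lemma trace_meas:
  assumes orthp: "(\<Sum>r<N. phr d r * \<psi> r) = 0" and l: "l < d" and k: "k < d"
  shows "mtrace (tensor_mat (E d l) (E d k) * V * rho \<psi> * mat_adjoint V) = complex_of_real ((\<psi> (l*d+k))\<^sup>2)"
proof -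
  define T where "T = tensor_mat (E d l) (E d k)"
  define s where "s = l*d+k"
  have sN: "s < N"
  proof -
    have "l*d+k < l*d+d" using k by simp
    also have "\<dots> = (l+1)*d" by simp
    also have "\<dots> \<le> d*d" using l by (intro mult_le_mono1) simp
    finally show ?thesis by (simp add: s_def)
  qed
  have Tc: "T \<in> carrier_mat N N" unfolding T_def by (rule tensor_E_carrier)
  have Rc: "rho \<psi> \<in> carrier_mat n n" by (simp add: rho_def)
  have Ac: "mat_adjoint V \<in> carrier_mat n N" by (rule adj_carrier[OF Vc])
  define M where "M = V * rho \<psi> * mat_adjoint V"
  have VR: "V * rho \<psi> \<in> carrier_mat N n" by (rule mult_carrier_mat[OF Vc Rc])
  have Mc: "M \<in> carrier_mat N N" unfolding M_def by (rule mult_carrier_mat[OF VR Ac])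
  have TV: "T * V \<in> carrier_mat N n" by (rule mult_carrier_mat[OF Tc Vc])
  have "T * V * rho \<psi> * mat_adjoint V = T * (V * rho \<psi>) * mat_adjoint V"
    unfolding assoc_mult_mat[OF Tc Vc Rc] ..
  also have "\<dots> = T * M" unfolding M_def by (rule assoc_mult_mat[OF Tc VR Ac])
  finally have eq: "T * V * rho \<psi> * mat_adjoint V = T * M" .
  have TMc: "T * M \<in> carrier_mat N N" by (rule mult_carrier_mat[OF Tc Mc])
  have "mtrace (T * M) = (\<Sum>t<N. (T * M)$$(t,t))"
    unfolding mtrace_def carrier_matD(1)[OF TMc] ..
  also have "\<dots> = (\<Sum>t<N. \<Sum>y<N. T$$(t,y) * M$$(y,t))"
    by (intro sum.cong refl) (simp add: mult_entry[OF Tc Mc])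
  also have "\<dots> = (\<Sum>t<N. \<Sum>y<N. if t = s \<and> y = s then M$$(s,s) else 0)"
    unfolding T_def s_def by (intro sum.cong refl) (simp add: tensor_E[OF l k])
  also have "\<dots> = (\<Sum>t<N. if t = s then (\<Sum>y<N. if y = s then M$$(s,s) else 0) else 0)"
    by (intro sum.cong refl) auto
  also have "\<dots> = M$$(s,s)" using sN by simp
  also have "\<dots> = complex_of_real ((\<psi> s)\<^sup>2)"
    unfolding M_def using VrhoV[OF orthp sN sN] by (simp add: power2_eq_square)
  finally show ?thesis using eq by (simp add: T_def s_def)
qed

end

definition cc :: "nat \<Rightarrow> nat \<Rightarrow> real" where
  "cc I x = (if x < I then 1 else if x = I then - real I else 0)"

definition ra :: "nat \<Rightarrow> nat \<Rightarrow> nat" where "ra d i = (i - (d - 1)) div (d - 1)"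
definition rb :: "nat \<Rightarrow> nat \<Rightarrow> nat" where
  "rb d i = (if (i - (d - 1)) mod (d - 1) < ra d i then (i - (d - 1)) mod (d - 1) else (i - (d - 1)) mod (d - 1) + 1)"
definition idx :: "nat \<Rightarrow> nat \<Rightarrow> nat \<Rightarrow> nat" where
  "idx d l k = d - 1 + l * (d - 1) + (if k < l then k else k - 1)"

lemma n_eq: "(d::nat) \<ge> 1 \<Longrightarrow> d\<^sup>2 - 1 = (d - 1) * (d - 1) + 2 * (d - 1)"
  by (cases d) (auto simp: power2_eq_square algebra_simps)

lemma offdiag:
  assumes d: "d \<ge> 3" and i1: "d - 1 \<le> i" and i2: "i < d\<^sup>2 - 1"
  shows "ra d i < d" "rb d i < d" "ra d i \<noteq> rb d i" "idx d (ra d i) (rb d i) = i"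
proof -
  define D where "D = d - 1"
  define m where "m = i - D"
  have dD: "d = D + 1" using d by (simp add: D_def)
  have D2: "D \<ge> 2" using d by (simp add: D_def)
  have "i < D * D + 2 * D" using i2 n_eq[of d] d by (simp add: D_def)
  then have "m < D * D + D" by (simp add: m_def)
  also have "D * D + D = d * D" using dD by simp
  finally have mlt: "m < d * D" .
  have ra: "ra d i = m div D" by (simp add: ra_def m_def D_def)
  have rb: "rb d i = (if m mod D < m div D then m mod D else m mod D + 1)"
    by (simp add: rb_def ra m_def D_def)
  show a: "ra d i < d" unfolding ra using mlt by (simp add: less_mult_imp_div_less)
  have bD: "m mod D < D" using D2 by simp
  show "rb d i < d" unfolding rb using bD dD by auto
  show "ra d i \<noteq> rb d i" unfolding rb ra by auto
  have "idx d (ra d i) (rb d i) = D + (m div D) * D + m mod D"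
    unfolding idx_def ra rb by (auto simp: D_def)
  also have "\<dots> = D + m" by simp
  also have "\<dots> = i" using i1 by (simp add: m_def D_def)
  finally show "idx d (ra d i) (rb d i) = i" .
qed

lemma idx_bound:
  assumes d: "d \<ge> 3" and l: "l < d" and k: "k < d" and lk: "l \<noteq> k"
  shows "idx d l k < d\<^sup>2 - 1" "d - 1 \<le> idx d l k"
proof -
  define D where "D = d - 1"
  have dD: "d = D + 1" using d by (simp add: D_def)
  have kk: "(if k < l then k else k - 1) \<le> D - 1" using l k lk dD by auto
  have lD: "l * D \<le> D * D" using l dD by (simp add: mult_le_mono1)
  have "idx d l k = D + l * D + (if k < l then k else k - 1)" by (simp add: idx_def D_def)
  also have "\<dots> \<le> D + D * D + (D - 1)" using kk lD by (intro add_mono) auto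
  finally have "idx d l k \<le> D + D * D + (D - 1)" .
  also have "\<dots> < D * D + 2 * D" using d dD by simp
  finally show "idx d l k < d\<^sup>2 - 1" using n_eq[of d] d by (simp add: D_def)
  show "d - 1 \<le> idx d l k" by (simp add: idx_def)
qed

lemma sum_cc_gen: "I < (d::nat) \<Longrightarrow> (\<Sum>x<d. if x < I then f x else if x = I then g else 0) = (\<Sum>x<I. f x) + (g::real)"
proof (induction d)
  case 0 then show ?case by simp
next
  case (Suc d)
  show ?case
  proof (cases "I < d")
    case True then show ?thesis using Suc by simp
  next
    case False
    then have Id: "I = d" using Suc by simp
    have "(\<Sum>x<d. if x < I then f x else if x = I then g else 0) = (\<Sum>x<d. f x)"
      using Id by (intro sum.cong) auto
    then show ?thesis using Id by simp
  qed
qed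

lemma sum_cc: "I < d \<Longrightarrow> (\<Sum>x<d. cc I x) = 0"
  unfolding cc_def using sum_cc_gen[of I d "\<lambda>_. 1" "- real I"] by simp

lemma sum_cc_sq: "I < d \<Longrightarrow> (\<Sum>x<d. (cc I x)\<^sup>2) = real I * (real I + 1)"
proof -
  assume "I < d"
  have "(\<Sum>x<d. (cc I x)\<^sup>2) = (\<Sum>x<d. if x < I then 1 else if x = I then (real I)\<^sup>2 else 0)"
    by (intro sum.cong refl) (simp add: cc_def)
  also have "\<dots> = real I + (real I)\<^sup>2" using sum_cc_gen[OF \<open>I < d\<close>, of "\<lambda>_. 1" "(real I)\<^sup>2"] by simp
  finally show ?thesis by (simp add: power2_eq_square algebra_simps)
qed


definition sI :: "nat \<Rightarrow> real" where "sI I = sqrt (real I * (real I + 1))"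

definition psi :: "nat \<Rightarrow> nat \<Rightarrow> nat \<Rightarrow> real" where
  "psi d i r = (if i < d - 1 then (if r div d = r mod d then cc (i+1) (r div d) / sI (i+1) else 0)
               else (if r = ra d i * d + rb d i then 1 else 0))"

lemma grid_div: "y < d \<Longrightarrow> (x * d + y) div d = (x::nat)" "y < d \<Longrightarrow> (x * d + y) mod d = y"
  by auto

lemma psi_diag_grid: "i < d - 1 \<Longrightarrow> x < d \<Longrightarrow> y < d \<Longrightarrow>
  psi d i (x*d+y) = (if x = y then cc (i+1) x / sI (i+1) else 0)"
  by (simp add: psi_def grid_div)

lemma psi_off_grid: "\<not> i < d - 1 \<Longrightarrow> x < d \<Longrightarrow> y < d \<Longrightarrow> rb d i < d \<Longrightarrow>
  psi d i (x*d+y) = (if x = ra d i \<and> y = rb d i then 1 else 0)"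
  using divmod_eq[of "rb d i" d "x*d+y" "ra d i"] by (auto simp: psi_def grid_div)

lemma sI_sq: "I > 0 \<Longrightarrow> (sI I)\<^sup>2 = real I * (real I + 1)" by (simp add: sI_def)
lemma sI_pos: "I > 0 \<Longrightarrow> sI I > 0" by (simp add: sI_def)

lemma psi_props:
  assumes d: "d \<ge> 3" and i: "i < d\<^sup>2 - 1"
  shows "(\<Sum>r<d*d. phr d r * psi d i r) = 0" "(\<Sum>r<d*d. (psi d i r)\<^sup>2) = 1"
proof -
  have d0: "0 < d" using d by simp
  show "(\<Sum>r<d*d. phr d r * psi d i r) = 0"
  proof (cases "i < d - 1")
    case True
    have "(\<Sum>r<d*d. phr d r * psi d i r) = (\<Sum>x<d. \<Sum>y<d. phr d (x*d+y) * psi d i (x*d+y))"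
      by (rule sum_split_prod)
    also have "\<dots> = (\<Sum>x<d. \<Sum>y<d. if x = y then (1 / sqrt (real d)) * (cc (i+1) x / sI (i+1)) else 0)"
      by (intro sum.cong refl) (simp add: phr_diag psi_diag_grid[OF True])
    also have "\<dots> = (\<Sum>x<d. (1 / sqrt (real d) / sI (i+1)) * cc (i+1) x)"
      by simp
    also have "\<dots> = (1 / sqrt (real d) / sI (i+1)) * (\<Sum>x<d. cc (i+1) x)"
      by (simp add: sum_distrib_left)
    also have "\<dots> = 0" using True sum_cc[of "i+1" d] by simp
    finally show ?thesis .
  next
    case False
    have off: "ra d i < d" "rb d i < d" "ra d i \<noteq> rb d i" using offdiag[OF d _ i] False by auto
    have "(\<Sum>r<d*d. phr d r * psi d i r) = (\<Sum>x<d. \<Sum>y<d. phr d (x*d+y) * psi d i (x*d+y))"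
      by (rule sum_split_prod)
    also have "\<dots> = (\<Sum>x<d. \<Sum>y<d. if x = ra d i \<and> y = rb d i then 0 else 0)"
      by (intro sum.cong refl) (use off in \<open>auto simp: phr_diag psi_off_grid[OF False]\<close>)
    finally show ?thesis by simp
  qed
  show "(\<Sum>r<d*d. (psi d i r)\<^sup>2) = 1"
  proof (cases "i < d - 1")
    case True
    have "(\<Sum>r<d*d. (psi d i r)\<^sup>2) = (\<Sum>x<d. \<Sum>y<d. (psi d i (x*d+y))\<^sup>2)"
      by (rule sum_split_prod)
    also have "\<dots> = (\<Sum>x<d. \<Sum>y<d. if x = y then (cc (i+1) x)\<^sup>2 / (sI (i+1))\<^sup>2 else 0)"
      by (intro sum.cong refl) (simp add: psi_diag_grid[OF True] power_divide)
    also have "\<dots> = (\<Sum>x<d. (cc (i+1) x)\<^sup>2) / (sI (i+1))\<^sup>2"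
      by (simp add: sum_divide_distrib)
    also have "\<dots> = 1" using True sum_cc_sq[of "i+1" d] sI_sq[of "i+1"] by simp
    finally show ?thesis .
  next
    case False
    have off: "ra d i < d" "rb d i < d" using offdiag[OF d _ i] False by auto
    have "(\<Sum>r<d*d. (psi d i r)\<^sup>2) = (\<Sum>x<d. \<Sum>y<d. (psi d i (x*d+y))\<^sup>2)"
      by (rule sum_split_prod)
    also have "\<dots> = (\<Sum>x<d. \<Sum>y<d. if x = ra d i \<and> y = rb d i then 1 else 0)"
      by (intro sum.cong refl) (use off in \<open>auto simp: psi_off_grid[OF False]\<close>)
    also have "\<dots> = (\<Sum>x<d. if x = ra d i then (\<Sum>y<d. if y = rb d i then 1 else 0) else 0)"
      by (intro sum.cong refl) auto
    also have "\<dots> = 1" using off by simp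
    finally show ?thesis .
  qed
qed


definition qq :: "nat \<Rightarrow> nat \<Rightarrow> nat \<Rightarrow> nat \<Rightarrow> real" where
  "qq d j l k = (if l = k then (if j = l - 1 then 1 else 0) else (if j = idx d l k then 1 else 0))"

lemma d_lt_n: "(d::nat) \<ge> 3 \<Longrightarrow> d < d\<^sup>2 - 1"
  using n_eq[of d] by (cases d) (auto simp: algebra_simps)

lemma qq_stoch:
  assumes d: "d \<ge> 3" and l: "l < d" and k: "k < d"
  shows "(\<Sum>j<d\<^sup>2 - 1. qq d j l k) = 1" "0 \<le> qq d j l k"
proof -
  show "0 \<le> qq d j l k" by (simp add: qq_def)
  show "(\<Sum>j<d\<^sup>2 - 1. qq d j l k) = 1"
  proof (cases "l = k")
    case True
    have "l - 1 < d\<^sup>2 - 1" using d_lt_n[OF d] l by linarith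
    then show ?thesis using True by (simp add: qq_def)
  next
    case False
    have "idx d l k < d\<^sup>2 - 1" using idx_bound[OF d l k False] by simp
    then show ?thesis using False by (simp add: qq_def)
  qed
qed

lemma sum_filter_j:
  assumes "(d::nat) \<ge> 2"
  shows "(\<Sum>l<d. if j = l - 1 then h l else (0::real)) =
    (if j = 0 then h 0 + h 1 else if j + 1 < d then h (j+1) else 0)"
proof -
  have "(\<Sum>l<d. if j = l - 1 then h l else 0) = (\<Sum>l\<in>{l\<in>{..<d}. j = l - 1}. h l)"
    by (rule sum.inter_filter[symmetric]) simp
  also have "{l\<in>{..<d}. j = l - 1} = (if j = 0 then {0,1} else if j + 1 < d then {j+1} else {})"
    using assms by auto
  finally show ?thesis by auto
qed

lemma M_kd_entry:
  assumes "i < d\<^sup>2 - 1" "j < d\<^sup>2 - 1"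
  shows "M_kd d $$ (i,j) = (if i < d - 1 \<and> j < d - 1 then M_Sigma_entry (i + 1) (j + 1)
     else if d - 1 \<le> i \<and> d - 1 \<le> j then (if i = j then 1 else 0) else 0)"
  using assms by (simp add: M_kd_def)

lemma entry:
  assumes d: "d \<ge> 3" and i: "i < d\<^sup>2 - 1" and j: "j < d\<^sup>2 - 1"
  shows "(\<Sum>l<d. \<Sum>k<d. qq d j l k * (psi d i (l*d+k))\<^sup>2) = M_kd d $$ (i,j)"
proof (cases "i < d - 1")
  case False
  have off: "ra d i < d" "rb d i < d" "ra d i \<noteq> rb d i" "idx d (ra d i) (rb d i) = i"
    using offdiag[OF d _ i] False by auto
  have "(\<Sum>l<d. \<Sum>k<d. qq d j l k * (psi d i (l*d+k))\<^sup>2) =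
        (\<Sum>l<d. \<Sum>k<d. if l = ra d i \<and> k = rb d i then qq d j l k else 0)"
    by (intro sum.cong refl) (use off in \<open>auto simp: psi_off_grid[OF False]\<close>)
  also have "\<dots> = (\<Sum>l<d. if l = ra d i then (\<Sum>k<d. if k = rb d i then qq d j l k else 0) else 0)"
    by (intro sum.cong refl) auto
  also have "\<dots> = qq d j (ra d i) (rb d i)" using off by simp
  also have "\<dots> = (if j = i then 1 else 0)" using off by (simp add: qq_def)
  also have "\<dots> = M_kd d $$ (i,j)" using False i j by (auto simp: M_kd_entry)
  finally show ?thesis .
next
  case True
  define I where "I = i + 1"
  have I1: "I \<ge> 1" and Id: "I < d" using True by (auto simp: I_def)
  define h where "h l = (cc I l)\<^sup>2 / (real I * (real I + 1))" for l
  have "(\<Sum>l<d. \<Sum>k<d. qq d j l k * (psi d i (l*d+k))\<^sup>2) =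
        (\<Sum>l<d. \<Sum>k<d. if k = l then (if j = l - 1 then h l else 0) else 0)"
    by (intro sum.cong refl)
       (use I1 in \<open>auto simp: psi_diag_grid[OF True] qq_def h_def power_divide sI_sq I_def\<close>)
  also have "\<dots> = (\<Sum>l<d. if j = l - 1 then h l else 0)" by simp
  also have "\<dots> = (if j = 0 then h 0 + h 1 else if j + 1 < d then h (j+1) else 0)"
    using d by (intro sum_filter_j) simp
  also have "\<dots> = M_kd d $$ (i,j)"
  proof (cases "j = 0")
    case True
    have "h 0 + h 1 = 2 / (real I * (real I + 1))"
      using I1 by (cases "I = 1") (auto simp: h_def cc_def add_divide_distrib[symmetric])
    then show ?thesis using True \<open>i < d - 1\<close> i j d I1
      by (simp add: M_kd_entry M_Sigma_entry_def I_def)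
  next
    case False
    show ?thesis
    proof (cases "j < d - 1")
      case jl: True
      have "j + 1 < d" using jl by simp
      moreover have "h (j+1) = M_Sigma_entry I (j+1)"
      proof -
        consider "j + 1 > I" | "j + 1 = I" | "j + 1 < I" by linarith
        then show ?thesis
        proof cases
          case 1 then show ?thesis by (simp add: h_def cc_def M_Sigma_entry_def)
        next
          case 2
          have Ip: "real I \<noteq> 0" using I1 by simp
          have "(real I)\<^sup>2 / (real I * (real I + 1)) = real I / (real I + 1)"
            using Ip by (simp add: power2_eq_square)
          then show ?thesis using 2 False I1
            by (simp add: h_def cc_def M_Sigma_entry_def)
        next
          case 3 then show ?thesis using False by (simp add: h_def cc_def M_Sigma_entry_def)
        qed
      qed
      ultimately show ?thesis using False \<open>i < d - 1\<close> jl i j by (simp add: M_kd_entry I_def)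
    next
      case jl: False
      then show ?thesis using False \<open>i < d - 1\<close> i j by (simp add: M_kd_entry)
    qed
  qed
  finally show ?thesis .
qed


lemma povm_E: "povm d (E d) d"
  unfolding povm_def
proof (intro conjI allI impI)
  fix l assume l: "l < d"
  show "psd d (E d l)"
  proof (rule psd_from_sq)
    show "E d l \<in> carrier_mat d d" by (simp add: E_def)
  next
    fix a b assume "a < d" "b < d"
    then show "E d l $$ (a,b) = cnj (E d l $$ (b,a))" by (simp add: E_def)
  next
    fix v
    have "sq d (E d l) v v = (\<Sum>a<d. \<Sum>b<d. if a = l \<and> b = l then cnj (v l) * v l else 0)"
      unfolding sq_def by (intro sum.cong refl) (auto simp: E_def)
    also have "\<dots> = (\<Sum>a<d. if a = l then (\<Sum>b<d. if b = l then cnj (v l) * v l else 0) else 0)"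
      by (intro sum.cong refl) auto
    also have "\<dots> = v l * cnj (v l)" using l by (simp add: mult.commute)
    finally show "0 \<le> Re (sq d (E d l) v v)" by (simp add: complex_mult_cnj)
  qed
next
  fix a b assume ab: "a < d" "b < d"
  have "(\<Sum>j<d. E d j $$ (a, b)) = (\<Sum>j<d. if j = a then (if a = b then 1 else 0) else 0)"
    using ab by (intro sum.cong refl) (auto simp: E_def)
  also have "\<dots> = (if a = b then 1 else 0)" using ab by simp
  finally show "(\<Sum>j<d. E d j $$ (a, b)) = (if a = b then 1 else 0)" .
qed

lemma M_kd_diag: assumes "d \<ge> 3" "i < d\<^sup>2 - 1" shows "M_kd d $$ (i,i) \<noteq> 0"
  using assms by (auto simp: M_kd_entry M_Sigma_entry_def)

lemma M_kd_upper: assumes "i < j" "j < d\<^sup>2 - 1" shows "M_kd d $$ (i,j) = 0"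
  using assms by (auto simp: M_kd_entry M_Sigma_entry_def)

context thm3_setup begin

lemma in_Pmin: "M_kd d \<in> P_min V d d n n"
  unfolding P_min_def
proof (intro CollectI conjI exI)
  show "M_kd d \<in> carrier_mat n n" by (simp add: M_kd_def n_def)
  have dc: "dim_col V = n" using Vc by simp
  have pp: "(\<Sum>r<N. phr d r * psi d i r) = 0" "(\<Sum>r<N. (psi d i r)\<^sup>2) = 1" if "i < n" for i
    using psi_props[OF d3, of i] that by (auto simp: n_def)
  show "\<forall>i<n. density (dim_col V) (rho (psi d i))"
    unfolding dc using rho_density pp by blast
  show "povm d (E d) d" "povm d (E d) d" by (rule povm_E)+
  show "\<forall>l<d. \<forall>k<d. (\<forall>j<n. 0 \<le> qq d j l k) \<and> (\<Sum>j<n. qq d j l k) = 1"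
    using qq_stoch[OF d3] by (auto simp: n_def)
  show "\<forall>i<n. \<forall>j<n. complex_of_real (M_kd d $$ (i, j)) =
     (\<Sum>l<d. \<Sum>k<d. complex_of_real (qq d j l k) *
        mtrace (tensor_mat (E d l) (E d k) * V * rho (psi d i) * mat_adjoint V))"
  proof (intro allI impI)
    fix i j assume i: "i < n" and j: "j < n"
    have "(\<Sum>l<d. \<Sum>k<d. complex_of_real (qq d j l k) *
        mtrace (tensor_mat (E d l) (E d k) * V * rho (psi d i) * mat_adjoint V)) =
        (\<Sum>l<d. \<Sum>k<d. complex_of_real (qq d j l k * (psi d i (l*d+k))\<^sup>2))"
      by (intro sum.cong refl) (simp add: trace_meas[OF pp(1)[OF i]])
    also have "\<dots> = complex_of_real (\<Sum>l<d. \<Sum>k<d. qq d j l k * (psi d i (l*d+k))\<^sup>2)"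
      by simp
    also have "\<dots> = complex_of_real (M_kd d $$ (i,j))"
      using entry[OF d3, of i j] i j by (simp add: n_def)
    finally show "complex_of_real (M_kd d $$ (i, j)) =
     (\<Sum>l<d. \<Sum>k<d. complex_of_real (qq d j l k) *
        mtrace (tensor_mat (E d l) (E d k) * V * rho (psi d i) * mat_adjoint V))" by simp
  qed
qed

lemma not_sub: "dt < n \<Longrightarrow> \<not> P_min V d d n n \<subseteq> P_Q dt n n"
proof
  assume dt: "dt < n" and sub: "P_min V d d n n \<subseteq> P_Q dt n n"
  then have "M_kd d \<in> P_Q dt n n" using in_Pmin by blast
  then obtain \<rho> \<Lambda> where r: "\<forall>i<n. density dt (\<rho> i)" and L: "povm dt \<Lambda> n"
    and tr: "\<forall>i<n. \<forall>j<n. complex_of_real (M_kd d $$ (i, j)) = mtrace (\<Lambda> j * \<rho> i)"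
    unfolding P_Q_def by blast
  have "n \<le> dt"
  proof (rule dim_bound[of n dt \<rho> \<Lambda> "M_kd d"])
    show "\<forall>i<n. psd dt (\<rho> i)" using r by (simp add: density_def)
    show "\<forall>j<n. psd dt (\<Lambda> j)" using L by (simp add: povm_def)
    show "\<forall>i<n. \<forall>j<n. complex_of_real (M_kd d $$ (i, j)) = mtrace (\<Lambda> j * \<rho> i)" by (rule tr)
    show "\<forall>i<n. M_kd d $$ (i, i) \<noteq> 0" using M_kd_diag[OF d3] by (simp add: n_def)
    show "\<forall>i j. i < j \<longrightarrow> j < n \<longrightarrow> M_kd d $$ (i, j) = 0" using M_kd_upper by (simp add: n_def)
  qed
  then show False using dt by simp
qed

end

theorem theorem3:
  fixes d :: nat and V :: "complex mat"
  assumes "d \<ge> 3"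
    and "isometry (d\<^sup>2 - 1) (d * d) V"
    and "\<forall>v \<in> carrier_vec (d\<^sup>2 - 1). cinner (phi_plus d) (V *\<^sub>v v) = 0"
  shows "M_kd d \<in> P_min V d d (d\<^sup>2 - 1) (d\<^sup>2 - 1) \<and>
         (\<forall>dt < d\<^sup>2 - 1. \<not> P_min V d d (d\<^sup>2 - 1) (d\<^sup>2 - 1) \<subseteq> P_Q dt (d\<^sup>2 - 1) (d\<^sup>2 - 1))"
proof -
  interpret thm3_setup d V using assms by unfold_locales
  show ?thesis using in_Pmin not_sub by (simp add: n_def)
qed


end
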